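(* Let $A$ be an independent set in $G(n,4,1)$, and let $A_0$, $k$, $A_2$ be as in the context. Then $|A_2|\le 2k^2+o(n^2)$, where the $o(n^2)$ term (as $n\to\infty$) does not depend on $A$ or on the choice of $A_0$.
   Context: $G(n,4,1)$ is the graph on the $4$-element subsets of $[n]$ in which two are adjacent iff they intersect in exactly one element. Let $A_0=\{v_1,\dots,v_k\}\subset A$ be a subfamily of pairwise disjoint sets of maximum possible cardinality, and let $A_2$ be the set of $v\in A\setminus A_0$ that intersect exactly two of the sets $v_1,\dots,v_k$. *)

theory Defs
  imports Complex_Main
begin

definition G_vertices :: "nat \<Rightarrow> nat set set" where
  "G_vertices n = {S. S \<subseteq> {1..n} \<and> card S = 4}"

definition G_adj :: "nat set \<Rightarrow> nat set \<Rightarrow> bool" where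
  "G_adj S T \<longleftrightarrow> card (S \<inter> T) = 1"

definition G_independent :: "nat \<Rightarrow> nat set set \<Rightarrow> bool" where
  "G_independent n A \<longleftrightarrow> A \<subseteq> G_vertices n \<and> (\<forall>S\<in>A. \<forall>T\<in>A. \<not> G_adj S T)"

definition pairwise_disjoint_fam :: "nat set set \<Rightarrow> bool" where
  "pairwise_disjoint_fam F \<longleftrightarrow> (\<forall>S\<in>F. \<forall>T\<in>F. S \<noteq> T \<longrightarrow> S \<inter> T = {})"

definition max_disjoint_subfamily :: "nat set set \<Rightarrow> nat set set \<Rightarrow> bool" where
  "max_disjoint_subfamily A A0 \<longleftrightarrow> A0 \<subseteq> A \<and> pairwise_disjoint_fam A0 \<and>
     (\<forall>B. B \<subseteq> A \<and> pairwise_disjoint_fam B \<longrightarrow> card B \<le> card A0)"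

definition A2_of :: "nat set set \<Rightarrow> nat set set \<Rightarrow> nat set set" where
  "A2_of A A0 = {v \<in> A - A0. card {u \<in> A0. u \<inter> v \<noteq> {}} = 2}"

end

theory Submission
  imports Defs
begin

lemma two_subsets_cases:
  assumes "finite u" "card u = 4" "X \<subseteq> u" "X' \<subseteq> u" "card X = 2" "card X' = 2"
    "card (X \<inter> X') \<noteq> 1"
  shows "X = X' \<or> X = u - X'"
proof -
  have fX: "finite X" "finite X'" using assms finite_subset by auto
  have le: "card (X \<inter> X') \<le> 2" using fX assms(5) by (metis card_mono inf_le1)
  show ?thesis
  proof (cases "card (X \<inter> X') = 0")
    case True
    then have "X \<inter> X' = {}" using fX by simp
    then have "X \<subseteq> u - X'" using assms by auto
    moreover have "card (u - X') = 2" using assms by (simp add: card_Diff_subset fX)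
    ultimately have "X = u - X'" using assms(1,5) by (metis card_subset_eq finite_Diff)
    then show ?thesis by simp
  next
    case False
    then have "card (X \<inter> X') = 2" using le assms(7) by linarith
    then have "X \<inter> X' = X" "X \<inter> X' = X'" using fX assms(5,6)
      by (metis card_subset_eq inf_le1 inf_le2)+
    then show ?thesis by auto
  qed
qed

locale setup5 =
  fixes n :: nat and A A0 :: "nat set set"
  assumes indep: "G_independent n A" and sub: "A0 \<subseteq> A" and disj: "pairwise_disjoint_fam A0"
begin

definition T :: "nat set \<Rightarrow> nat set set" where
  "T v = {u\<in>A0. u \<inter> v \<noteq> {}}"

lemma A_props: "S \<in> A \<Longrightarrow> finite S \<and> card S = 4 \<and> S \<subseteq> {1..n}"
  using indep unfolding G_independent_def G_vertices_def by (auto intro: finite_subset)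

lemma finA: "finite A"
proof -
  have "A \<subseteq> Pow {1..n}" using A_props by auto
  then show ?thesis by (rule finite_subset) simp
qed

lemma finA0: "finite A0" using finA sub finite_subset by auto

lemma noadj: "S \<in> A \<Longrightarrow> S' \<in> A \<Longrightarrow> card (S \<inter> S') \<noteq> 1"
  using indep unfolding G_independent_def G_adj_def by auto

lemma A2_in: "v \<in> A2_of A A0 \<Longrightarrow> v \<in> A \<and> v \<notin> A0 \<and> card (T v) = 2"
  unfolding A2_of_def T_def by auto

lemma L1:
  assumes v: "v \<in> A2_of A A0"
  shows "\<forall>u\<in>T v. card (u \<inter> v) = 2" and "v = \<Union>((\<lambda>u. u \<inter> v) ` T v)"
proof -
  obtain u1 u2 where T: "T v = {u1,u2}" "u1 \<noteq> u2" using A2_in[OF v] card_2_iff by metis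
  have u12: "u1 \<in> A0" "u2 \<in> A0" "u1 \<inter> v \<noteq> {}" "u2 \<inter> v \<noteq> {}" using T unfolding T_def by auto
  have vA: "v \<in> A" using A2_in[OF v] by auto
  have fv: "finite v" "card v = 4" using A_props[OF vA] by auto
  have d: "u1 \<inter> u2 = {}" using disj u12 T(2) unfolding pairwise_disjoint_fam_def by auto
  have g1: "card (u1 \<inter> v) \<ge> 2"
  proof -
    have "card (u1 \<inter> v) \<noteq> 0" using u12 fv by simp
    moreover have "card (u1 \<inter> v) \<noteq> 1" using noadj[of u1 v] u12 sub vA by auto
    ultimately show ?thesis by linarith
  qed
  have g2: "card (u2 \<inter> v) \<ge> 2"
  proof -
    have "card (u2 \<inter> v) \<noteq> 0" using u12 fv by simp
    moreover have "card (u2 \<inter> v) \<noteq> 1" using noadj[of u2 v] u12 sub vA by auto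
    ultimately show ?thesis by linarith
  qed
  have cu: "card ((u1 \<inter> v) \<union> (u2 \<inter> v)) = card (u1 \<inter> v) + card (u2 \<inter> v)"
    using d fv by (intro card_Un_disjoint) auto
  have "card ((u1 \<inter> v) \<union> (u2 \<inter> v)) \<le> card v" using fv by (intro card_mono) auto
  then have e: "card (u1 \<inter> v) = 2" "card (u2 \<inter> v) = 2" using cu g1 g2 fv by linarith+
  then have "card ((u1 \<inter> v) \<union> (u2 \<inter> v)) = card v" using cu fv by simp
  then have "(u1 \<inter> v) \<union> (u2 \<inter> v) = v" using fv by (metis card_subset_eq Un_least inf_le2)
  then show "v = \<Union>((\<lambda>u. u \<inter> v) ` T v)" using T by auto
  show "\<forall>u\<in>T v. card (u \<inter> v) = 2" using T e by auto
qed

lemma L2: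
  assumes v: "v \<in> A2_of A A0" and v': "v' \<in> A2_of A A0" and u: "u \<in> T v" "u \<in> T v'"
    and ne: "T v \<noteq> T v'"
  shows "card ((u \<inter> v) \<inter> (u \<inter> v')) \<noteq> 1"
proof -
  obtain u1 u2 where T: "T v = {u1,u2}" "u1 \<noteq> u2" using A2_in[OF v] card_2_iff by metis
  obtain w1 w2 where T': "T v' = {w1,w2}" "w1 \<noteq> w2" using A2_in[OF v'] card_2_iff by metis
  have "v \<inter> v' \<subseteq> u"
  proof
    fix x assume x: "x \<in> v \<inter> v'"
    obtain a where a: "a \<in> T v" "x \<in> a" using x L1(2)[OF v] by blast
    obtain b where b: "b \<in> T v'" "x \<in> b" using x L1(2)[OF v'] by blast
    show "x \<in> u"
    proof (rule ccontr)
      assume "x \<notin> u"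
      then have "a \<noteq> u" "b \<noteq> u" using a b by auto
      then have "a \<noteq> b" using T T' u ne a(1) b(1) by auto
      moreover have "a \<in> A0" "b \<in> A0" using a b unfolding T_def by auto
      ultimately have "a \<inter> b = {}" using disj unfolding pairwise_disjoint_fam_def by auto
      then show False using a b by auto
    qed
  qed
  then have "(u \<inter> v) \<inter> (u \<inter> v') = v \<inter> v'" by auto
  moreover have "card (v \<inter> v') \<noteq> 1" using noadj A2_in v v' by auto
  ultimately show ?thesis by simp
qed

definition P where "P = T ` A2_of A A0"
definition F where "F p = {v \<in> A2_of A A0. T v = p}"

lemma finA2: "finite (A2_of A A0)"
  using finA unfolding A2_of_def by auto

lemma finP: "finite P" unfolding P_def using finA2 by simp

lemma imcard6:
  assumes "u \<in> p" "p \<in> P"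
  shows "card ((\<lambda>v. u \<inter> v) ` F p) \<le> 6"
proof -
  have uA0: "u \<in> A0" using assms unfolding P_def T_def by auto
  then have fu: "finite u" "card u = 4" using A_props sub by auto
  have "(\<lambda>v. u \<inter> v) ` F p \<subseteq> {X. X \<subseteq> u \<and> card X = 2}"
    using L1(1) assms unfolding F_def by auto
  moreover have "card {X. X \<subseteq> u \<and> card X = 2} = 6"
  proof -
    have "card {X. X \<subseteq> u \<and> card X = 2} = 4 choose 2" using n_subsets[OF fu(1), of 2] fu(2) by simp
    also have "(4::nat) choose 2 = 6" by (simp add: choose_two)
    finally show ?thesis .
  qed
  moreover have "finite {X. X \<subseteq> u \<and> card X = 2}"
    by (rule finite_subset[of _ "Pow u"]) (use fu(1) in auto)
  ultimately show ?thesis using card_mono by fastforce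
qed

lemma imcard2:
  assumes "u \<in> p" "p \<in> P" "q \<in> P" "u \<in> q" "q \<noteq> p"
  shows "card ((\<lambda>v. u \<inter> v) ` F p) \<le> 2"
proof -
  have uA0: "u \<in> A0" using assms unfolding P_def T_def by auto
  then have fu: "finite u" "card u = 4" using A_props sub by auto
  obtain v' where v': "v' \<in> A2_of A A0" "T v' = q" using assms unfolding P_def by auto
  have c': "card (u \<inter> v') = 2" using L1(1)[OF v'(1)] v' assms by auto
  have "(\<lambda>v. u \<inter> v) ` F p \<subseteq> {u \<inter> v', u - (u \<inter> v')}"
  proof
    fix X assume "X \<in> (\<lambda>v. u \<inter> v) ` F p"
    then obtain v where v: "v \<in> A2_of A A0" "T v = p" "X = u \<inter> v" unfolding F_def by auto
    have c: "card (u \<inter> v) = 2" using L1(1)[OF v(1)] v assms by auto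
    have "card ((u \<inter> v) \<inter> (u \<inter> v')) \<noteq> 1" using L2[OF v(1) v'(1)] v v' assms by auto
    then show "X \<in> {u \<inter> v', u - (u \<inter> v')}"
      using two_subsets_cases[OF fu, of "u \<inter> v" "u \<inter> v'"] c c' v(3) by auto
  qed
  moreover have "card {u \<inter> v', u - (u \<inter> v')} \<le> 2" by (simp add: card_insert_if)
  ultimately show ?thesis by (meson card_mono finite.emptyI finite.insertI order_trans)
qed

lemma Fcard:
  assumes "p \<in> P"
  shows "\<exists>u1 u2. p = {u1,u2} \<and> card (F p) \<le> card ((\<lambda>v. u1 \<inter> v) ` F p) * card ((\<lambda>v. u2 \<inter> v) ` F p)"
proof -
  obtain v0 where v0: "v0 \<in> A2_of A A0" "T v0 = p" using assms unfolding P_def by auto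
  obtain u1 u2 where T: "p = {u1,u2}" using A2_in[OF v0(1)] v0(2) card_2_iff by metis
  have inj: "inj_on (\<lambda>v. (u1 \<inter> v, u2 \<inter> v)) (F p)"
  proof (rule inj_onI)
    fix v w assume vw: "v \<in> F p" "w \<in> F p" "(u1 \<inter> v, u2 \<inter> v) = (u1 \<inter> w, u2 \<inter> w)"
    have "v = (u1 \<inter> v) \<union> (u2 \<inter> v)" using L1(2)[of v] vw T unfolding F_def by auto
    moreover have "w = (u1 \<inter> w) \<union> (u2 \<inter> w)" using L1(2)[of w] vw T unfolding F_def by auto
    ultimately show "v = w" using vw(3) by auto
  qed
  have fF: "finite (F p)" using finA2 unfolding F_def by auto
  have "card (F p) = card ((\<lambda>v. (u1 \<inter> v, u2 \<inter> v)) ` F p)" using card_image[OF inj] by simp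
  also have "\<dots> \<le> card ((\<lambda>v. u1 \<inter> v) ` F p \<times> (\<lambda>v. u2 \<inter> v) ` F p)"
    by (rule card_mono) (use fF in auto)
  also have "\<dots> = card ((\<lambda>v. u1 \<inter> v) ` F p) * card ((\<lambda>v. u2 \<inter> v) ` F p)" by (simp add: card_cartesian_product)
  finally show ?thesis using T by blast
qed

definition bad where "bad = {p\<in>P. \<exists>u\<in>p. \<forall>q\<in>P. u \<in> q \<longrightarrow> q = p}"

lemma P_sub: "P \<subseteq> {p. p \<subseteq> A0 \<and> card p = 2}"
  unfolding P_def T_def using A2_in unfolding T_def by auto

lemma Fp_le: "p \<in> P \<Longrightarrow> card (F p) \<le> 36"
proof -
  assume p: "p \<in> P"
  obtain u1 u2 where u: "p = {u1,u2}" "card (F p) \<le> card ((\<lambda>v. u1 \<inter> v) ` F p) * card ((\<lambda>v. u2 \<inter> v) ` F p)"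
    using Fcard[OF p] by blast
  have "card ((\<lambda>v. u1 \<inter> v) ` F p) \<le> 6" "card ((\<lambda>v. u2 \<inter> v) ` F p) \<le> 6"
    using imcard6 p u(1) by auto
  then have "card ((\<lambda>v. u1 \<inter> v) ` F p) * card ((\<lambda>v. u2 \<inter> v) ` F p) \<le> 6 * 6"
    by (intro mult_le_mono) auto
  then show ?thesis using u(2) by simp
qed

lemma Fp_good: "p \<in> P - bad \<Longrightarrow> card (F p) \<le> 4"
proof -
  assume p: "p \<in> P - bad"
  obtain u1 u2 where u: "p = {u1,u2}" "card (F p) \<le> card ((\<lambda>v. u1 \<inter> v) ` F p) * card ((\<lambda>v. u2 \<inter> v) ` F p)"
    using Fcard p by blast
  have g: "\<And>u. u \<in> p \<Longrightarrow> \<exists>q\<in>P. u \<in> q \<and> q \<noteq> p" using p unfolding bad_def by auto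
  have "card ((\<lambda>v. u1 \<inter> v) ` F p) \<le> 2"
    using g[of u1] imcard2[of u1 p] p u(1) by auto
  moreover have "card ((\<lambda>v. u2 \<inter> v) ` F p) \<le> 2"
    using g[of u2] imcard2[of u2 p] p u(1) by auto
  ultimately have "card ((\<lambda>v. u1 \<inter> v) ` F p) * card ((\<lambda>v. u2 \<inter> v) ` F p) \<le> 2 * 2"
    by (intro mult_le_mono) auto
  then show ?thesis using u(2) by simp
qed

lemma bad_card: "card bad \<le> card A0"
proof -
  define w where "w p = (SOME u. u \<in> p \<and> (\<forall>q\<in>P. u \<in> q \<longrightarrow> q = p))" for p
  have w: "p \<in> bad \<Longrightarrow> w p \<in> p \<and> (\<forall>q\<in>P. w p \<in> q \<longrightarrow> q = p)" for p
    unfolding w_def bad_def by (rule someI_ex) auto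
  have "inj_on w bad"
  proof (rule inj_onI)
    fix p p' assume a: "p \<in> bad" "p' \<in> bad" "w p = w p'"
    then show "p = p'" using w[OF a(1)] w[OF a(2)] unfolding bad_def by auto
  qed
  moreover have "w ` bad \<subseteq> A0"
  proof
    fix u assume "u \<in> w ` bad"
    then obtain p where p: "p \<in> bad" "u = w p" by auto
    then have "p \<in> P" unfolding bad_def by auto
    then have "p \<subseteq> A0" using P_sub by auto
    then show "u \<in> A0" using w[OF p(1)] p(2) by auto
  qed
  ultimately show ?thesis using card_inj_on_le[OF _ _ finA0] by blast
qed

lemma A2_bound: "card (A2_of A A0) \<le> 2 * card A0 ^ 2 + 36 * card A0"
proof -
  have "A2_of A A0 = (\<Union>p\<in>P. F p)" unfolding P_def F_def by auto
  then have "card (A2_of A A0) \<le> (\<Sum>p\<in>P. card (F p))" using card_UN_le[OF finP] by simp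
  also have "\<dots> = (\<Sum>p\<in>P - bad. card (F p)) + (\<Sum>p\<in>bad. card (F p))"
    using finP by (subst sum.subset_diff[of bad P]) (auto simp: bad_def)
  also have "\<dots> \<le> (\<Sum>p\<in>P - bad. 4) + (\<Sum>p\<in>bad. 36)"
    using Fp_good Fp_le unfolding bad_def by (intro add_mono sum_mono) auto
  also have "\<dots> = 4 * card (P - bad) + 36 * card bad" by simp
  also have "\<dots> \<le> 4 * (card A0 choose 2) + 36 * card A0"
  proof -
    have "card (P - bad) \<le> card {p. p \<subseteq> A0 \<and> card p = 2}"
      using P_sub finA0 by (intro card_mono) auto
    then have "card (P - bad) \<le> card A0 choose 2" using n_subsets[OF finA0] by simp
    then show ?thesis using bad_card by linarith
  qed
  also have "\<dots> \<le> 2 * card A0 ^ 2 + 36 * card A0"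
  proof -
    have "4 * (card A0 choose 2) \<le> 2 * card A0 ^ 2"
    proof -
      have aux: "\<And>m::nat. 4*(m div 2) \<le> 2*m" by presburger
      have "card A0 * (card A0 - 1) \<le> card A0 * card A0" by simp
      then show ?thesis unfolding choose_two power2_eq_square
        using aux[of "card A0 * (card A0 - 1)"] by linarith
    qed
    then show ?thesis by linarith
  qed
  finally show ?thesis .
qed

lemma A0_le_n: "card A0 \<le> n"
proof -
  have ne: "u \<in> A0 \<Longrightarrow> finite u \<and> u \<noteq> {} \<and> u \<subseteq> {1..n}" for u
    using A_props sub by fastforce
  have "inj_on Min A0"
  proof (rule inj_onI)
    fix u u' assume a: "u \<in> A0" "u' \<in> A0" "Min u = Min u'"
    then have "Min u \<in> u \<inter> u'" using ne by (metis IntI Min_in)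
    then show "u = u'" using disj a unfolding pairwise_disjoint_fam_def by blast
  qed
  moreover have "Min ` A0 \<subseteq> {1..n}" using ne Min_in by blast
  ultimately have "card A0 \<le> card {1..n}" using card_inj_on_le[of Min A0 "{1..n}"] by simp
  then show ?thesis by simp
qed

end

theorem lemma5:
  shows "\<forall>\<epsilon>::real>0. \<exists>N::nat. \<forall>n\<ge>N. \<forall>A A0.
           G_independent n A \<and> max_disjoint_subfamily A A0 \<longrightarrow>
           real (card (A2_of A A0)) \<le> 2 * real (card A0) ^ 2 + \<epsilon> * real n ^ 2"
proof (intro allI impI)
  fix \<epsilon> :: real assume e: "\<epsilon> > 0"
  show "\<exists>N::nat. \<forall>n\<ge>N. \<forall>A A0.
           G_independent n A \<and> max_disjoint_subfamily A A0 \<longrightarrow>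
           real (card (A2_of A A0)) \<le> 2 * real (card A0) ^ 2 + \<epsilon> * real n ^ 2"
  proof (intro exI allI impI)
    fix n :: nat and A A0 assume n: "nat \<lceil>36 / \<epsilon>\<rceil> \<le> n"
      and h: "G_independent n A \<and> max_disjoint_subfamily A A0"
    interpret setup5 n A A0 using h unfolding setup5_def max_disjoint_subfamily_def by auto
    have b: "real (card (A2_of A A0)) \<le> 2 * real (card A0) ^ 2 + 36 * real (card A0)"
    proof -
      have "real (card (A2_of A A0)) \<le> real (2 * card A0 ^ 2 + 36 * card A0)"
        using A2_bound by (simp only: of_nat_le_iff)
      then show ?thesis by simp
    qed
    have k: "real (card A0) \<le> real n" using A0_le_n by simp
    have "36 / \<epsilon> \<le> real n" using n by linarith
    then have "36 \<le> \<epsilon> * real n" using e by (simp add: field_simps)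
    then have "36 * real n \<le> \<epsilon> * real n * real n" by (simp add: mult_right_mono)
    then have "36 * real (card A0) \<le> \<epsilon> * real n ^ 2" using k by (simp add: power2_eq_square)
    then show "real (card (A2_of A A0)) \<le> 2 * real (card A0) ^ 2 + \<epsilon> * real n ^ 2" using b by linarith
  qed
qed

end
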